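(* Let $f\in\mathbb{R}[X_1,\dots,X_n]$ be a non-constant polynomial of degree $2d$ and let $r\in\mathbb{R}$. Suppose there exist nonnegative real numbers $a_{\alpha,i}$, $\alpha\in\Delta$, $i=1,\dots,n$, with $a_{\alpha,i}=0$ if and only if $\alpha_i=0$, such that, writing $a_\alpha=(a_{\alpha,1},\dots,a_{\alpha,n})$, (1) $(2d)^{2d}a_{\alpha}^{\alpha}=|f_{\alpha}|^{2d}\alpha^{\alpha}$ for each $\alpha\in\Delta$ with $|\alpha|=2d$; (2) $f_{2d,i}\ge\sum_{\alpha\in\Delta}a_{\alpha,i}$ for $i=1,\dots,n$; and (3) $f_0-r\ge\sum_{\alpha\in\Delta^{<2d}}(2d-|\alpha|)\left[\frac{|f_{\alpha}|^{2d}\alpha^{\alpha}}{(2d)^{2d}a_{\alpha}^{\alpha}}\right]^{\frac{1}{2d-|\alpha|}}$, where $\Delta^{<2d}:=\{\alpha\in\Delta:|\alpha|<2d\}$. Then $f-r$ is SOBS.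
   Context: $\mathbb{N}=\{0,1,2,\dots\}$. For $\alpha\in\mathbb{N}^n$ write $\underline{X}^\alpha=X_1^{\alpha_1}\cdots X_n^{\alpha_n}$, $|\alpha|=\sum_i\alpha_i$, and for $a\in\mathbb{R}^n$, $a^\alpha=\prod_i a_i^{\alpha_i}$ with $0^0=1$ (so $\alpha^\alpha=\prod_i\alpha_i^{\alpha_i}$). For $f=\sum_\alpha f_\alpha\underline{X}^\alpha$ of degree $2d$: $f_0$ is the constant term, $f_{2d,i}$ is the coefficient of $X_i^{2d}$, $\Omega=\{\alpha: f_\alpha\ne0\}\setminus\{\underline{0},2d\epsilon_1,\dots,2d\epsilon_n\}$ ($\epsilon_i$ the standard unit vectors), and $\Delta=\{\alpha\in\Omega:\ f_\alpha<0\text{ or }\alpha_i\text{ odd for some }i\}$. SOBS means a finite sum of squares of polynomials of the form $a\underline{X}^\alpha-b\underline{X}^\beta$, $a,b\in\mathbb{R}$. *)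

theory Defs
  imports Complex_Main "HOL-Library.Poly_Mapping"
begin

(* Real multivariate polynomials are represented as finitely supported maps from
exponent vectors (nat \<Rightarrow>\<^sub>0 nat) to real coefficients; the variable X_i (i = 1..n)
corresponds to index i-1 \<in> {..<n}. *)

type_synonym mpoly = "(nat \<Rightarrow>\<^sub>0 nat) \<Rightarrow>\<^sub>0 real"

definition in_vars :: "nat \<Rightarrow> mpoly \<Rightarrow> bool" where
  "in_vars n f \<longleftrightarrow> (\<forall>\<alpha>\<in>Poly_Mapping.keys f. Poly_Mapping.keys (\<alpha>::nat \<Rightarrow>\<^sub>0 nat) \<subseteq> {..<n})"

definition tdeg :: "(nat \<Rightarrow>\<^sub>0 nat) \<Rightarrow> nat" where
  "tdeg \<alpha> = (\<Sum>i\<in>Poly_Mapping.keys \<alpha>. Poly_Mapping.lookup \<alpha> i)"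

definition poly_deg :: "mpoly \<Rightarrow> nat" where
  "poly_deg f = (if Poly_Mapping.keys f = {} then 0 else Max (tdeg ` Poly_Mapping.keys f))"

definition mono :: "real \<Rightarrow> (nat \<Rightarrow>\<^sub>0 nat) \<Rightarrow> mpoly" where
  "mono a \<alpha> = Poly_Mapping.single \<alpha> a"

definition coef :: "mpoly \<Rightarrow> (nat \<Rightarrow>\<^sub>0 nat) \<Rightarrow> real" where
  "coef f \<alpha> = Poly_Mapping.lookup f \<alpha>"

definition pure :: "nat \<Rightarrow> nat \<Rightarrow> (nat \<Rightarrow>\<^sub>0 nat)" where
  "pure k i = Poly_Mapping.single i k"

definition Omega :: "nat \<Rightarrow> nat \<Rightarrow> mpoly \<Rightarrow> (nat \<Rightarrow>\<^sub>0 nat) set" where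
  "Omega n d f = {\<alpha>\<in>Poly_Mapping.keys f. \<alpha> \<noteq> 0 \<and> (\<forall>i<n. \<alpha> \<noteq> pure (2*d) i)}"

definition Delta :: "nat \<Rightarrow> nat \<Rightarrow> mpoly \<Rightarrow> (nat \<Rightarrow>\<^sub>0 nat) set" where
  "Delta n d f = {\<alpha>\<in>Omega n d f. coef f \<alpha> < 0 \<or> (\<exists>i<n. odd (Poly_Mapping.lookup \<alpha> i))}"

definition vpow :: "nat \<Rightarrow> (nat \<Rightarrow> real) \<Rightarrow> (nat \<Rightarrow>\<^sub>0 nat) \<Rightarrow> real" where
  "vpow n a \<alpha> = (\<Prod>i<n. a i ^ Poly_Mapping.lookup \<alpha> i)"

definition SOBS :: "nat \<Rightarrow> mpoly \<Rightarrow> bool" where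
  "SOBS n g \<longleftrightarrow> (\<exists>L :: (real \<times> (nat \<Rightarrow>\<^sub>0 nat) \<times> real \<times> (nat \<Rightarrow>\<^sub>0 nat)) list.
      (\<forall>(a,\<alpha>,b,\<beta>)\<in>set L. Poly_Mapping.keys \<alpha> \<subseteq> {..<n} \<and> Poly_Mapping.keys \<beta> \<subseteq> {..<n}) \<and>
      g = (\<Sum>(a,\<alpha>,b,\<beta>)\<leftarrow>L. (mono a \<alpha> - mono b \<beta>) * (mono a \<alpha> - mono b \<beta>)))"

end

theory Submission
  imports Defs
begin


definition is_term :: "nat \<Rightarrow> mpoly \<Rightarrow> bool" where
  "is_term n w \<longleftrightarrow> (\<exists>c \<mu>. Poly_Mapping.keys \<mu> \<subseteq> {..<n} \<and> w = mono c \<mu>)"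

lemma is_termI: "Poly_Mapping.keys \<mu> \<subseteq> {..<n} \<Longrightarrow> is_term n (mono c \<mu>)"
  unfolding is_term_def by blast

lemma mono_mult: "mono a \<alpha> * mono b \<beta> = mono (a*b) (\<alpha>+\<beta>)"
  by (simp add: mono_def mult_single)

lemma is_term_mult: "is_term n w \<Longrightarrow> is_term n v \<Longrightarrow> is_term n (w * v)"
proof -
  assume "is_term n w" "is_term n v"
  then obtain c \<mu> c' \<mu>' where "Poly_Mapping.keys \<mu> \<subseteq> {..<n}" "w = mono c \<mu>"
     "Poly_Mapping.keys \<mu>' \<subseteq> {..<n}" "v = mono c' \<mu>'" unfolding is_term_def by blast
  then show ?thesis
    using keys_add[of \<mu> \<mu>'] by (auto simp: mono_mult intro!: is_termI)
qed

lemma is_term_one: "is_term n 1"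
  unfolding is_term_def by (rule exI[of _ 1], rule exI[of _ 0]) (simp add: mono_def)

lemma is_term_power: "is_term n w \<Longrightarrow> is_term n (w ^ k)"
  by (induction k) (auto simp: is_term_one is_term_mult)

lemma is_term_prod: "(\<And>i. i \<in> I \<Longrightarrow> is_term n (s i)) \<Longrightarrow> is_term n (\<Prod>i\<in>I. s i)"
  by (induction I rule: infinite_finite_induct) (auto simp: is_term_one is_term_mult)

lemma is_term_neg: "is_term n w \<Longrightarrow> is_term n (- w)"
  unfolding is_term_def mono_def by (metis single_uminus)

lemma SOBS_zero: "SOBS n 0"
  unfolding SOBS_def by (rule exI[of _ "[]"]) simp

lemma SOBS_add: "SOBS n g \<Longrightarrow> SOBS n h \<Longrightarrow> SOBS n (g + h)"
  unfolding SOBS_def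
  apply (elim exE conjE)
  subgoal for L M by (rule exI[of _ "L @ M"]) auto
  done

lemma SOBS_sum: "(\<And>i. i \<in> I \<Longrightarrow> SOBS n (g i)) \<Longrightarrow> SOBS n (\<Sum>i\<in>I. g i)"
  by (induction I rule: infinite_finite_induct) (auto simp: SOBS_zero SOBS_add)

lemma SOBS_binom: "is_term n w \<Longrightarrow> is_term n v \<Longrightarrow> SOBS n ((w - v) * (w - v))"
proof -
  assume "is_term n w" "is_term n v"
  then obtain c \<mu> c' \<mu>' where "Poly_Mapping.keys \<mu> \<subseteq> {..<n}" "w = mono c \<mu>"
     "Poly_Mapping.keys \<mu>' \<subseteq> {..<n}" "v = mono c' \<mu>'" unfolding is_term_def by blast
  then show ?thesis unfolding SOBS_def
    by (intro exI[of _ "[(c,\<mu>,c',\<mu>')]"]) auto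
qed

lemma SOBS_sq: "is_term n w \<Longrightarrow> SOBS n (w * w)"
  using SOBS_binom[of n w 0] is_termI[of 0 n 0] by (simp add: mono_def)

lemma SOBS_mult_sq: assumes "is_term n w" "SOBS n g" shows "SOBS n (w * w * g)"
proof -
  obtain c \<mu> where w: "Poly_Mapping.keys \<mu> \<subseteq> {..<n}" "w = mono c \<mu>" using assms(1) unfolding is_term_def by blast
  obtain L where L: "\<forall>(a,\<alpha>,b,\<beta>)\<in>set L. Poly_Mapping.keys \<alpha> \<subseteq> {..<n} \<and> Poly_Mapping.keys \<beta> \<subseteq> {..<n}"
    "g = (\<Sum>(a,\<alpha>,b,\<beta>)\<leftarrow>L. (mono a \<alpha> - mono b \<beta>) * (mono a \<alpha> - mono b \<beta>))"
    using assms(2) unfolding SOBS_def by blast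
  define M where "M = map (\<lambda>(a,\<alpha>,b,\<beta>). (c*a, \<mu>+\<alpha>, c*b, \<mu>+\<beta>)) L"
  have "w * w * g = (\<Sum>(a,\<alpha>,b,\<beta>)\<leftarrow>M. (mono a \<alpha> - mono b \<beta>) * (mono a \<alpha> - mono b \<beta>))"
    unfolding M_def L(2) w(2)
    by (induction L) (auto simp: algebra_simps mono_mult)
  moreover have "\<forall>(a,\<alpha>,b,\<beta>)\<in>set M. Poly_Mapping.keys \<alpha> \<subseteq> {..<n} \<and> Poly_Mapping.keys \<beta> \<subseteq> {..<n}"
    using L(1) w(1) unfolding M_def by (auto dest!: subsetD[OF keys_add])
  ultimately show ?thesis unfolding SOBS_def by blast
qed

lemma SOBS_scale: assumes "c \<ge> 0" "SOBS n g" shows "SOBS n (mono c 0 * g)"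
proof -
  have "mono c 0 = mono (sqrt c) 0 * mono (sqrt c) 0" using assms(1) by (simp add: mono_mult)
  moreover have "is_term n (mono (sqrt c) 0)" unfolding is_term_def by (intro exI[of _ "sqrt c"] exI[of _ 0]) auto
  ultimately show ?thesis using SOBS_mult_sq assms(2) by metis
qed

lemma SOBS_of_nat: "SOBS n g \<Longrightarrow> SOBS n (of_nat k * g)"
  by (induction k) (auto simp: SOBS_zero SOBS_add algebra_simps)



context
  fixes n m :: nat and s :: "nat \<Rightarrow> mpoly"
  assumes st: "\<forall>i<m. is_term n (s i)"
begin

definition T :: "nat \<Rightarrow> mpoly" where "T i = s i * s i"

definition F :: "nat \<Rightarrow> (nat \<Rightarrow> nat) \<Rightarrow> mpoly" where
  "F d a = (\<Sum>i<m. of_nat (a i) * T i ^ d) - of_nat d * (\<Prod>i<m. T i ^ a i)"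

definition S :: "(nat \<Rightarrow> nat) \<Rightarrow> nat \<Rightarrow> mpoly" where
  "S a k = (\<Sum>i<m. of_nat (a i) * T i ^ k)"

lemma F_base: assumes "(\<Sum>i<m. a i) = 1" shows "F 1 a = 0"
proof -
  have "\<exists>k<m. a k \<ge> 1"
  proof (rule ccontr)
    assume "\<not> ?thesis"
    hence "\<forall>k\<in>{..<m}. a k = 0" by auto
    hence "(\<Sum>i<m. a i) = 0" by simp
    thus False using assms by simp
  qed
  then obtain k where k: "k < m" "a k \<ge> 1" by blast
  have "(\<Sum>i<m. a i) = a k + (\<Sum>i\<in>{..<m}-{k}. a i)"
    using k by (simp add: sum.remove)
  hence "a k + (\<Sum>i\<in>{..<m}-{k}. a i) = 1" using assms by simp
  hence ak: "a k = 1" and R: "(\<Sum>i\<in>{..<m}-{k}. a i) = 0" using k(2) by linarith+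
  have z: "a i = 0" if "i < m" "i \<noteq> k" for i
    using R that by simp
  have a: "a i = (if i = k then 1 else 0)" if "i < m" for i
    using ak z that by simp
  have "(\<Sum>i<m. of_nat (a i) * T i ^ 1) = (\<Sum>i<m. (if i = k then T i else 0))"
    by (rule sum.cong[OF refl]) (simp add: a)
  also have "\<dots> = T k" using k by simp
  finally have 1: "(\<Sum>i<m. of_nat (a i) * T i ^ 1) = T k" .
  have "(\<Prod>i<m. T i ^ a i) = (\<Prod>i<m. (if i = k then T i else 1))"
    by (rule prod.cong[OF refl]) (simp add: a)
  also have "\<dots> = T k" using k by simp
  finally show ?thesis unfolding F_def using 1 by simp
qed

lemma T_term: "i < m \<Longrightarrow> is_term n (T i)"
  using st by (simp add: T_def is_term_mult)

lemma Cheb_term: assumes "i < m" "j < m"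
  shows "SOBS n ((T i - T j) * (T i ^ d - T j ^ d))"
proof -
  have "T i ^ d - T j ^ d = (T i - T j) * (\<Sum>k<d. T j ^ (d - Suc k) * T i ^ k)"
    by (rule power_diff_sumr2)
  hence "(T i - T j) * (T i ^ d - T j ^ d) = ((T i - T j) * (T i - T j)) * (\<Sum>k<d. T j ^ (d - Suc k) * T i ^ k)"
    by (simp add: mult.assoc)
  also have "\<dots> = (\<Sum>k<d. ((T i - T j) * (T i - T j)) * (T j ^ (d - Suc k) * T i ^ k))"
    by (rule sum_distrib_left)
  also have "\<dots> = (\<Sum>k<d. (s j ^ (d - Suc k) * s i ^ k) * (s j ^ (d - Suc k) * s i ^ k) * ((T i - T j) * (T i - T j)))"
    by (rule sum.cong) (simp_all only: T_def power_mult_distrib mult_ac)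
  also have "SOBS n \<dots>"
    apply (rule SOBS_sum)
    apply (rule SOBS_mult_sq)
    using st assms by (auto intro!: is_term_mult is_term_power SOBS_binom T_term)
  finally show ?thesis .
qed

lemma upd_pt: fixes a :: "nat \<Rightarrow> nat" and X :: "nat \<Rightarrow> mpoly" assumes "a i \<ge> 1"
  shows "(of_nat ((a(i := a i - 1)) j) :: mpoly) * X j = of_nat (a j) * X j - (if j = i then X j else 0)"
  using assms by (cases "j = i") (simp_all add: of_nat_diff left_diff_distrib)

lemma sum_upd: assumes "i < m" "a i \<ge> 1"
  shows "(\<Sum>j<m. (of_nat ((a(i := a i - 1)) j) :: mpoly) * X j) = (\<Sum>j<m. of_nat (a j) * X j) - X i"
proof -
  have "(\<Sum>j<m. (of_nat ((a(i := a i - 1)) j) :: mpoly) * X j) = (\<Sum>j<m. of_nat (a j) * X j - (if j = i then X j else 0))"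
    by (rule sum.cong[OF refl]) (rule upd_pt[where a=a and i=i, OF assms(2)])
  also have "\<dots> = (\<Sum>j<m. of_nat (a j) * X j) - X i"
    using assms by (simp add: sum_subtractf)
  finally show ?thesis .
qed

lemma sum_upd_nat: fixes a :: "nat \<Rightarrow> nat" assumes "i < m" "a i \<ge> 1"
  shows "(\<Sum>j<m. (a(i := a i - 1)) j) = (\<Sum>j<m. a j) - 1"
proof -
  have "(\<Sum>j<m. a j) = a i + (\<Sum>j\<in>{..<m}-{i}. a j)" using assms by (simp add: sum.remove)
  moreover have "(\<Sum>j<m. (a(i := a i - 1)) j) = (a i - 1) + (\<Sum>j\<in>{..<m}-{i}. a j)"
    using assms by (simp add: sum.remove)
  moreover have "a i - 1 + R = a i + R - 1" for R :: nat using assms by simp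
  ultimately show ?thesis by simp
qed

lemma prod_upd: assumes "i < m" "a i \<ge> 1"
  shows "T i * (\<Prod>j<m. T j ^ (a(i := a i - 1)) j) = (\<Prod>j<m. T j ^ a j)"
proof -
  have "(\<Prod>j<m. T j ^ a j) = T i ^ a i * (\<Prod>j\<in>{..<m}-{i}. T j ^ a j)" using assms by (simp add: prod.remove)
  moreover have "(\<Prod>j<m. T j ^ (a(i := a i - 1)) j) = T i ^ (a i - 1) * (\<Prod>j\<in>{..<m}-{i}. T j ^ a j)"
    using assms by (simp add: prod.remove)
  moreover have "T i * T i ^ (a i - 1) = T i ^ a i" using assms
    by (metis Suc_diff_le diff_Suc_1 power_Suc)
  ultimately show ?thesis by (simp add: mult.assoc[symmetric])
qed


lemma F_S: "F D a = S a D - of_nat D * (\<Prod>i<m. T i ^ a i)"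
  by (simp add: F_def S_def)

lemma h3: assumes "(\<Sum>i<m. a i) = Suc d"
  shows "(\<Sum>i<m. of_nat (a i) * T i * F d (a(i := a i - 1)))
     = S a 1 * S a d - S a (Suc d) - of_nat d * of_nat (Suc d) * (\<Prod>i<m. T i ^ a i)"
proof -
  let ?P = "\<Prod>i<m. T i ^ a i"
  have t: "of_nat (a i) * T i * F d (a(i := a i - 1)) =
     (of_nat (a i) * T i) * S a d - of_nat (a i) * T i ^ Suc d - of_nat d * (of_nat (a i) * ?P)"
    if i: "i < m" for i
  proof (cases "a i = 0")
    case True then show ?thesis by simp
  next
    case False
    hence ai: "a i \<ge> 1" by simp
    have "F d (a(i := a i - 1)) = (S a d - T i ^ d) - of_nat d * (\<Prod>j<m. T j ^ (a(i := a i - 1)) j)"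
      unfolding F_def S_def using sum_upd[where a=a and X="\<lambda>j. T j ^ d", OF i ai] by simp
    moreover have "T i * (\<Prod>j<m. T j ^ (a(i := a i - 1)) j) = ?P" by (rule prod_upd[where a=a, OF i ai])
    moreover have "of_nat (a i) * T i * ((S a d - T i ^ d) - of_nat d * (\<Prod>j<m. T j ^ (a(i := a i - 1)) j))
       = (of_nat (a i) * T i) * S a d - of_nat (a i) * (T i * T i ^ d) - of_nat d * (of_nat (a i) * (T i * (\<Prod>j<m. T j ^ (a(i := a i - 1)) j)))"
      by (simp only: algebra_simps)
    ultimately show ?thesis by (simp only: power_Suc)
  qed
  have "(\<Sum>i<m. of_nat (a i) * T i * F d (a(i := a i - 1))) =
     (\<Sum>i<m. (of_nat (a i) * T i) * S a d - of_nat (a i) * T i ^ Suc d - of_nat d * (of_nat (a i) * ?P))"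
    by (rule sum.cong[OF refl]) (rule t, simp)
  also have "\<dots> = (\<Sum>i<m. of_nat (a i) * T i) * S a d - (\<Sum>i<m. of_nat (a i) * T i ^ Suc d) - of_nat d * ((\<Sum>i<m. of_nat (a i)) * ?P)"
    by (simp only: sum_subtractf sum_distrib_left sum_distrib_right)
  also have "\<dots> = (\<Sum>i<m. of_nat (a i) * T i) * S a d - S a (Suc d) - of_nat d * (of_nat (\<Sum>i<m. a i) * ?P)"
    by (simp only: S_def of_nat_sum)
  also have "\<dots> = S a 1 * S a d - S a (Suc d) - of_nat d * of_nat (Suc d) * ?P"
    using assms by (simp add: S_def mult.assoc)
  finally show ?thesis .
qed

lemma h4: assumes "(\<Sum>i<m. a i) = Suc d"
  shows "(\<Sum>i<m. \<Sum>j<m. of_nat (a i * a j) * ((T i - T j) * (T i ^ d - T j ^ d)))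
     = 2 * (of_nat (Suc d) * S a (Suc d) - S a 1 * S a d)"
proof -
  define A where "A i j = of_nat (a i) * of_nat (a j) * T i ^ Suc d" for i j
  define B where "B i j = (of_nat (a i) * T i) * (of_nat (a j) * T j ^ d)" for i j
  have t: "of_nat (a i * a j) * ((T i - T j) * (T i ^ d - T j ^ d)) = A i j - B i j - B j i + A j i" for i j
    by (simp add: A_def B_def algebra_simps)
  have "(\<Sum>i<m. \<Sum>j<m. of_nat (a i * a j) * ((T i - T j) * (T i ^ d - T j ^ d)))
     = (\<Sum>i<m. \<Sum>j<m. A i j - B i j - B j i + A j i)"
    by (simp only: t)
  also have "\<dots> = (\<Sum>i<m. \<Sum>j<m. A i j) - (\<Sum>i<m. \<Sum>j<m. B i j) - (\<Sum>i<m. \<Sum>j<m. B j i) + (\<Sum>i<m. \<Sum>j<m. A j i)"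
    by (simp only: sum.distrib sum_subtractf)
  finally have e: "(\<Sum>i<m. \<Sum>j<m. of_nat (a i * a j) * ((T i - T j) * (T i ^ d - T j ^ d)))
     = (\<Sum>i<m. \<Sum>j<m. A i j) - (\<Sum>i<m. \<Sum>j<m. B i j) - (\<Sum>i<m. \<Sum>j<m. B j i) + (\<Sum>i<m. \<Sum>j<m. A j i)" .
  note e
  moreover have "(\<Sum>i<m. \<Sum>j<m. A j i) = (\<Sum>i<m. \<Sum>j<m. A i j)" by (rule sum.swap)
  moreover have "(\<Sum>i<m. \<Sum>j<m. B j i) = (\<Sum>i<m. \<Sum>j<m. B i j)" by (rule sum.swap)
  moreover have "(\<Sum>i<m. \<Sum>j<m. B i j) = S a 1 * S a d"
    unfolding B_def S_def by (simp add: sum_product)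
  moreover have "(\<Sum>i<m. \<Sum>j<m. A i j) = of_nat (Suc d) * S a (Suc d)"
  proof -
    have "(\<Sum>i<m. \<Sum>j<m. A i j) = (\<Sum>i<m. of_nat (a i) * T i ^ Suc d * (\<Sum>j<m. of_nat (a j)))"
      unfolding A_def by (simp add: sum_distrib_left mult_ac)
    also have "\<dots> = (\<Sum>i<m. of_nat (a i) * T i ^ Suc d) * of_nat (Suc d)"
      using assms by (simp add: sum_distrib_right of_nat_sum[symmetric])
    finally show ?thesis by (simp add: S_def mult.commute)
  qed
  ultimately show ?thesis by (simp add: algebra_simps)
qed

lemma Zlemma: "d \<ge> 1 \<Longrightarrow> (\<Sum>i<m. a i) = d \<Longrightarrow> SOBS n (F d a)"
proof (induction d arbitrary: a rule: nat_induct_at_least)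
  case base
  then show ?case using F_base SOBS_zero by simp
next
  case (Suc d)
  let ?P = "\<Prod>i<m. T i ^ a i"
  let ?G = "\<Sum>i<m. of_nat (a i) * T i * F d (a(i := a i - 1))"
  let ?C = "\<Sum>i<m. \<Sum>j<m. of_nat (a i * a j) * ((T i - T j) * (T i ^ d - T j ^ d))"
  have key: "of_nat (2 * d) * F (Suc d) a = ?G + ?G + ?C"
    unfolding h3[OF Suc.prems] h4[OF Suc.prems] unfolding F_S by (simp add: algebra_simps)
  have G: "SOBS n ?G"
  proof (rule SOBS_sum)
    fix i assume "i \<in> {..<m}"
    hence i: "i < m" by simp
    show "SOBS n (of_nat (a i) * T i * F d (a(i := a i - 1)))"
    proof (cases "a i = 0")
      case True then show ?thesis by (simp add: SOBS_zero)
    next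
      case False
      hence "SOBS n (F d (a(i := a i - 1)))"
        using Suc.IH sum_upd_nat[OF i, of a] Suc.prems by simp
      hence "SOBS n (s i * s i * F d (a(i := a i - 1)))"
        using st i by (simp add: SOBS_mult_sq)
      hence "SOBS n (of_nat (a i) * (s i * s i * F d (a(i := a i - 1))))" by (rule SOBS_of_nat)
      thus ?thesis by (simp add: T_def mult_ac)
    qed
  qed
  have C: "SOBS n ?C"
    by (intro SOBS_sum SOBS_of_nat Cheb_term) auto
  have "SOBS n (?G + ?G + ?C)" by (intro SOBS_add G C)
  hence "SOBS n (of_nat (2 * d) * F (Suc d) a)" by (simp only: key)
  hence "SOBS n (mono (1 / real (2 * d)) 0 * (of_nat (2 * d) * F (Suc d) a))"
    by (intro SOBS_scale) auto
  moreover have "mono (1 / real (2 * d)) 0 * (of_nat (2 * d) :: mpoly) = 1"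
    using Suc.hyps unfolding mono_def
    by (simp add: single_of_nat[symmetric] mult_single del: single_of_nat)
  ultimately show ?case by (simp add: mult.assoc[symmetric])
qed

end


lemma pairing:
  fixes e :: "nat \<Rightarrow> nat"
  shows "\<exists>u v. (\<forall>i<m. even (u i) \<and> even (v i) \<and> u i + v i = 2 * e i) \<and>
     (\<Sum>i<m. u i) = (\<Sum>i<m. e i) + (if odd (\<Sum>i<m. e i) then 1 else 0) \<and>
     (\<Sum>i<m. v i) + (if odd (\<Sum>i<m. e i) then 1 else 0) = (\<Sum>i<m. e i)"
proof (induction m)
  case 0
  show ?case by (rule exI[of _ "\<lambda>i. 0"], rule exI[of _ "\<lambda>i. 0"]) simp
next
  case (Suc m)
  then obtain u v where uv: "\<forall>i<m. even (u i) \<and> even (v i) \<and> u i + v i = 2 * e i"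
    "(\<Sum>i<m. u i) = (\<Sum>i<m. e i) + (if odd (\<Sum>i<m. e i) then 1 else 0)"
    "(\<Sum>i<m. v i) + (if odd (\<Sum>i<m. e i) then 1 else 0) = (\<Sum>i<m. e i)" by blast
  define E where "E = (\<Sum>i<m. e i)"
  define a where "a = (if even (e m) then e m else if odd E then e m - 1 else e m + 1)"
  define b where "b = (if even (e m) then e m else if odd E then e m + 1 else e m - 1)"
  define u' where "u' = u(m := a)"
  define v' where "v' = v(m := b)"
  have su: "(\<Sum>i<Suc m. u' i) = (\<Sum>i<m. u i) + a"
    unfolding u'_def by (simp add: sum.cong[of "{..<m}" "{..<m}" "u(m := a)" u])
  have sv: "(\<Sum>i<Suc m. v' i) = (\<Sum>i<m. v i) + b"
    unfolding v'_def by (simp add: sum.cong[of "{..<m}" "{..<m}" "v(m := b)" v])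
  have se: "(\<Sum>i<Suc m. e i) = E + e m" unfolding E_def by simp
  have ev: "\<forall>i<Suc m. even (u' i) \<and> even (v' i) \<and> u' i + v' i = 2 * e i"
    using uv(1) unfolding u'_def v'_def a_def b_def by (auto elim: oddE simp: less_Suc_eq)
  have "(\<Sum>i<Suc m. u' i) = (\<Sum>i<Suc m. e i) + (if odd (\<Sum>i<Suc m. e i) then 1 else 0) \<and>
     (\<Sum>i<Suc m. v' i) + (if odd (\<Sum>i<Suc m. e i) then 1 else 0) = (\<Sum>i<Suc m. e i)"
    unfolding su sv se using uv(2,3) unfolding E_def[symmetric] a_def b_def
    by (cases "even (e m)"; cases "even E") (auto elim!: oddE evenE)
  with ev show ?case by blast
qed

lemma core:
  fixes s :: "nat \<Rightarrow> mpoly" and e :: "nat \<Rightarrow> nat"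
  assumes st: "\<forall>i<m. is_term n (s i)" and se: "(\<Sum>i<m. e i) = 2 * d" and d: "d \<ge> 1"
  shows "SOBS n ((\<Sum>i<m. of_nat (e i) * s i ^ (2 * d)) - of_nat (2 * d) * (\<Prod>i<m. s i ^ e i))"
proof -
  obtain u v where uv: "\<forall>i<m. even (u i) \<and> even (v i) \<and> u i + v i = 2 * e i"
    "(\<Sum>i<m. u i) = 2 * d" "(\<Sum>i<m. v i) = 2 * d"
    using pairing[of m e] se by auto
  define U where "U i = u i div 2" for i
  define V where "V i = v i div 2" for i
  have UV: "U i + V i = e i" if "i < m" for i using uv(1) that unfolding U_def V_def by (auto elim!: evenE)
  have sU: "(\<Sum>i<m. U i) = d"
  proof -
    have "(\<Sum>i<m. u i) = (\<Sum>i<m. 2 * U i)" by (rule sum.cong) (use uv(1) in \<open>auto simp: U_def\<close>)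
    thus ?thesis using uv(2) by (simp add: sum_distrib_left[symmetric])
  qed
  have sV: "(\<Sum>i<m. V i) = d"
  proof -
    have "(\<Sum>i<m. v i) = (\<Sum>i<m. 2 * V i)" by (rule sum.cong) (use uv(1) in \<open>auto simp: V_def\<close>)
    thus ?thesis using uv(3) by (simp add: sum_distrib_left[symmetric])
  qed
  define p where "p = (\<Prod>i<m. s i ^ U i)"
  define q where "q = (\<Prod>i<m. s i ^ V i)"
  have FU: "F m s d U = (\<Sum>i<m. of_nat (U i) * s i ^ (2 * d)) - of_nat d * (p * p)"
    unfolding F_def[OF st] T_def[OF st] p_def
    by (simp add: power_mult_distrib prod.distrib power_mult power2_eq_square mult.commute)
  have FV: "F m s d V = (\<Sum>i<m. of_nat (V i) * s i ^ (2 * d)) - of_nat d * (q * q)"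
    unfolding F_def[OF st] T_def[OF st] q_def
    by (simp add: power_mult_distrib prod.distrib power_mult power2_eq_square mult.commute)
  have pq: "p * q = (\<Prod>i<m. s i ^ e i)"
    unfolding p_def q_def prod.distrib[symmetric] power_add[symmetric]
    by (rule prod.cong) (simp_all add: UV)
  have se2: "(\<Sum>i<m. of_nat (e i) * s i ^ (2 * d)) = (\<Sum>i<m. of_nat (U i) * s i ^ (2 * d)) + (\<Sum>i<m. of_nat (V i) * s i ^ (2 * d))"
    unfolding sum.distrib[symmetric] by (rule sum.cong) (simp_all add: UV[symmetric] algebra_simps)
  have eq: "(\<Sum>i<m. of_nat (e i) * s i ^ (2 * d)) - of_nat (2 * d) * (\<Prod>i<m. s i ^ e i)
     = F m s d U + F m s d V + of_nat d * ((p - q) * (p - q))"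
    unfolding FU FV se2 pq[symmetric] by (simp add: algebra_simps)
  have tp: "is_term n p" "is_term n q" unfolding p_def q_def using st
    by (auto intro!: is_term_prod is_term_power)
  show ?thesis unfolding eq
    by (intro SOBS_add SOBS_of_nat SOBS_binom tp Zlemma[OF st d] sU sV)
qed



lemma lookup_mono: "Poly_Mapping.lookup (mono c \<mu>) \<beta> = (if \<beta> = \<mu> then c else 0)"
  by (auto simp: mono_def lookup_single)

lemma mono_neg: "- mono c \<mu> = mono (- c) \<mu>"
  by (simp add: mono_def single_uminus)

lemma mono_zero: "mono 0 \<mu> = 0"
  by (simp add: mono_def)

lemma of_nat_mono: "(of_nat k :: mpoly) * mono c \<mu> = mono (real k * c) \<mu>"
  by (simp add: mono_def single_of_nat[symmetric] mult_single del: single_of_nat)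

lemma mono_one: "mono 1 0 = 1"
  by (simp add: mono_def)

lemma single_Suc: "Poly_Mapping.single i (Suc 0) + Poly_Mapping.single i k = Poly_Mapping.single i (Suc k)"
  by (simp add: single_add[symmetric])

lemma mono_pow_single: "mono c (Poly_Mapping.single i 1) ^ k = mono (c ^ k) (Poly_Mapping.single i k)"
proof (induction k)
  case 0 then show ?case by (simp add: mono_one)
next
  case (Suc k) then show ?case by (simp add: mono_mult single_Suc)
qed

lemma mono_pow_single': "mono c (Poly_Mapping.single i (Suc 0)) ^ k = mono (c ^ k) (Poly_Mapping.single i k)"
  using mono_pow_single by simp

lemma mono_pow0: "mono c 0 ^ k = mono (c ^ k) 0"
proof (induction k)
  case 0 then show ?case by (simp add: mono_one)
next
  case (Suc k) then show ?case by (simp add: mono_mult)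
qed

lemma prod_mono: "(\<Prod>i\<in>I. mono (f i) (g i)) = mono (\<Prod>i\<in>I. f i) (\<Sum>i\<in>I. g i)"
proof (induction I rule: infinite_finite_induct)
  case (infinite A) then show ?case by (simp add: mono_one)
next
  case empty then show ?case by (simp add: mono_one)
next
  case (insert x F) then show ?case by (simp add: mono_mult)
qed

lemma even_half: "even (x::nat) \<Longrightarrow> x div 2 + x div 2 = x" by presburger

lemma sum_if_eq: "(\<Sum>i<(n::nat). if i = j then g i else 0) = (if j < n then g j else (0::'a::comm_monoid_add))"
  by (induction n) auto

lemma decomp: fixes \<alpha> :: "nat \<Rightarrow>\<^sub>0 nat" assumes "Poly_Mapping.keys \<alpha> \<subseteq> {..<n}"
  shows "(\<Sum>i<n. Poly_Mapping.single i (Poly_Mapping.lookup \<alpha> i)) = \<alpha>"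
proof (rule poly_mapping_eqI)
  fix j
  have "Poly_Mapping.lookup (\<Sum>i<n. Poly_Mapping.single i (Poly_Mapping.lookup \<alpha> i)) j
      = (\<Sum>i<n. if i = j then Poly_Mapping.lookup \<alpha> i else 0)"
    by (simp add: lookup_sum lookup_single when_def)
  also have "\<dots> = (if j < n then Poly_Mapping.lookup \<alpha> j else 0)"
    by (rule sum_if_eq)
  also have "\<dots> = Poly_Mapping.lookup \<alpha> j" using assms by (auto simp: in_keys_iff)
  finally show "Poly_Mapping.lookup (\<Sum>i<n. Poly_Mapping.single i (Poly_Mapping.lookup \<alpha> i)) j = Poly_Mapping.lookup \<alpha> j" .
qed

lemma tdeg_sum: assumes "Poly_Mapping.keys \<alpha> \<subseteq> {..<n}"
  shows "tdeg \<alpha> = (\<Sum>i<n. Poly_Mapping.lookup \<alpha> i)"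
  unfolding tdeg_def
  by (rule sum.mono_neutral_left) (use assms in \<open>auto simp: in_keys_iff\<close>)

lemma even_mono:
  assumes "Poly_Mapping.keys \<gamma> \<subseteq> {..<n}" "\<forall>i. even (Poly_Mapping.lookup \<gamma> i)" "c \<ge> 0"
  shows "SOBS n (mono c \<gamma>)"
proof -
  define \<eta> where "\<eta> = Poly_Mapping.map (\<lambda>x. x div 2) \<gamma>"
  have l: "Poly_Mapping.lookup \<eta> i = Poly_Mapping.lookup \<gamma> i div 2" for i
    unfolding \<eta>_def by (simp add: map.rep_eq when_def)
  have "\<eta> + \<eta> = \<gamma>"
    by (rule poly_mapping_eqI) (use assms(2) in \<open>simp add: lookup_add l even_half\<close>)
  have "Poly_Mapping.keys \<eta> \<subseteq> {..<n}"
  proof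
    fix x assume "x \<in> Poly_Mapping.keys \<eta>"
    hence "Poly_Mapping.lookup \<gamma> x \<noteq> 0" by (auto simp: in_keys_iff l)
    hence "x \<in> Poly_Mapping.keys \<gamma>" by (simp add: in_keys_iff)
    thus "x \<in> {..<n}" using assms(1) by blast
  qed
  hence "SOBS n (mono (sqrt c) \<eta> * mono (sqrt c) \<eta>)" by (intro SOBS_sq is_termI)
  thus ?thesis using \<open>\<eta> + \<eta> = \<gamma>\<close> assms(3) by (simp add: mono_mult)
qed

lemma gen2:
  fixes \<alpha> :: "nat \<Rightarrow>\<^sub>0 nat" and a lam :: "nat \<Rightarrow> real" and lam0 c :: real and k d :: nat
  assumes keys: "Poly_Mapping.keys \<alpha> \<subseteq> {..<n}" and tk: "tdeg \<alpha> + k = 2 * d" and d: "d \<ge> 1"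
    and la: "\<forall>i<n. real (Poly_Mapping.lookup \<alpha> i) * lam i ^ (2 * d) = a i"
    and lc: "- (real (2 * d) * ((\<Prod>i<n. lam i ^ Poly_Mapping.lookup \<alpha> i) * lam0 ^ k)) = c"
  shows "SOBS n ((\<Sum>i<n. mono (a i) (pure (2 * d) i)) + mono (real k * lam0 ^ (2 * d)) 0 + mono c \<alpha>)"
proof -
  define s where "s i = (if i < n then mono (lam i) (Poly_Mapping.single i 1) else mono lam0 0)" for i
  define e where "e i = (if i < n then Poly_Mapping.lookup \<alpha> i else k)" for i
  have st: "\<forall>i<Suc n. is_term n (s i)" by (auto simp: s_def intro!: is_termI)
  have "(\<Sum>i<n. e i) = (\<Sum>i<n. Poly_Mapping.lookup \<alpha> i)" by (simp add: e_def)
  hence se: "(\<Sum>i<Suc n. e i) = 2 * d" using tdeg_sum[OF keys] tk by (simp add: e_def)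
  have C: "SOBS n ((\<Sum>i<Suc n. of_nat (e i) * s i ^ (2 * d)) - of_nat (2 * d) * (\<Prod>i<Suc n. s i ^ e i))"
    by (rule core[OF st se d])
  have "(\<Sum>i<n. of_nat (e i) * s i ^ (2 * d)) = (\<Sum>i<n. mono (a i) (pure (2 * d) i))"
    by (rule sum.cong) (use la in \<open>simp_all add: s_def e_def mono_pow_single mono_pow_single' of_nat_mono pure_def\<close>)
  hence e1: "(\<Sum>i<Suc n. of_nat (e i) * s i ^ (2 * d)) = (\<Sum>i<n. mono (a i) (pure (2 * d) i)) + mono (real k * lam0 ^ (2 * d)) 0"
    by (simp add: s_def e_def mono_pow0 of_nat_mono)
  have "(\<Prod>i<n. s i ^ e i) = (\<Prod>i<n. mono (lam i ^ Poly_Mapping.lookup \<alpha> i) (Poly_Mapping.single i (Poly_Mapping.lookup \<alpha> i)))"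
    by (rule prod.cong) (simp_all add: s_def e_def mono_pow_single mono_pow_single')
  also have "\<dots> = mono (\<Prod>i<n. lam i ^ Poly_Mapping.lookup \<alpha> i) \<alpha>"
    by (simp add: prod_mono decomp[OF keys])
  finally have "(\<Prod>i<n. s i ^ e i) = mono (\<Prod>i<n. lam i ^ Poly_Mapping.lookup \<alpha> i) \<alpha>" .
  hence e2: "(\<Prod>i<Suc n. s i ^ e i) = mono ((\<Prod>i<n. lam i ^ Poly_Mapping.lookup \<alpha> i) * lam0 ^ k) \<alpha>"
    by (simp add: s_def e_def mono_pow0 mono_mult)
  have "(\<Sum>i<Suc n. of_nat (e i) * s i ^ (2 * d)) - of_nat (2 * d) * (\<Prod>i<Suc n. s i ^ e i)
     = (\<Sum>i<n. mono (a i) (pure (2 * d) i)) + mono (real k * lam0 ^ (2 * d)) 0 + mono c \<alpha>"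
    unfolding e1 e2 of_nat_mono using lc by (simp add: mono_neg)
  with C show ?thesis by simp
qed

lemma gen:
  fixes \<alpha> :: "nat \<Rightarrow>\<^sub>0 nat" and a :: "nat \<Rightarrow> real" and lam0 c :: real and k d :: nat
  assumes keys: "Poly_Mapping.keys \<alpha> \<subseteq> {..<n}" and tk: "tdeg \<alpha> + k = 2 * d" and d: "d \<ge> 1"
    and c0: "c \<noteq> 0" and sg: "c < 0 \<or> (\<exists>j<n. odd (Poly_Mapping.lookup \<alpha> j))"
    and an: "\<forall>i<n. a i \<ge> 0" and az: "\<forall>i<n. a i = 0 \<longleftrightarrow> Poly_Mapping.lookup \<alpha> i = 0"
    and l0: "lam0 \<ge> 0"
    and pw: "(vpow n a \<alpha> / vpow n (\<lambda>i. real (Poly_Mapping.lookup \<alpha> i)) \<alpha>) * (lam0 ^ k) ^ (2 * d)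
             = (\<bar>c\<bar> / real (2 * d)) ^ (2 * d)"
  shows "SOBS n ((\<Sum>i<n. mono (a i) (pure (2 * d) i)) + mono (real k * lam0 ^ (2 * d)) 0 + mono c \<alpha>)"
proof -
  define D where "D = 2 * d"
  have D0: "0 < D" using d by (simp add: D_def)
  have evD: "even D" by (simp add: D_def)
  define lam where "lam i = root D (a i / real (Poly_Mapping.lookup \<alpha> i))" for i
  have lD: "lam i ^ D = a i / real (Poly_Mapping.lookup \<alpha> i)" if "i < n" for i
    unfolding lam_def using an that D0 by (intro real_root_pow_pos2) auto
  have la: "\<forall>i<n. real (Poly_Mapping.lookup \<alpha> i) * lam i ^ D = a i"
    using lD az by auto
  have lnn: "lam i \<ge> 0" if "i < n" for i
    unfolding lam_def using an that by (intro real_root_ge_zero) auto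
  define L where "L = (\<Prod>i<n. lam i ^ Poly_Mapping.lookup \<alpha> i)"
  have L0: "L \<ge> 0" unfolding L_def using lnn by (intro prod_nonneg) auto
  have "L ^ D = (\<Prod>i<n. (lam i ^ D) ^ Poly_Mapping.lookup \<alpha> i)"
    unfolding L_def prod_power_distrib by (simp add: power_mult[symmetric] mult.commute)
  also have "\<dots> = (\<Prod>i<n. a i ^ Poly_Mapping.lookup \<alpha> i / real (Poly_Mapping.lookup \<alpha> i) ^ Poly_Mapping.lookup \<alpha> i)"
    by (rule prod.cong) (simp_all add: lD power_divide)
  also have "\<dots> = vpow n a \<alpha> / vpow n (\<lambda>i. real (Poly_Mapping.lookup \<alpha> i)) \<alpha>"
    unfolding vpow_def by (rule prod_dividef)
  finally have LD: "L ^ D = vpow n a \<alpha> / vpow n (\<lambda>i. real (Poly_Mapping.lookup \<alpha> i)) \<alpha>" .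
  have "(L * lam0 ^ k) ^ D = L ^ D * (lam0 ^ k) ^ D" by (rule power_mult_distrib)
  also have "\<dots> = (vpow n a \<alpha> / vpow n (\<lambda>i. real (Poly_Mapping.lookup \<alpha> i)) \<alpha>) * (lam0 ^ k) ^ D"
    by (simp only: LD)
  also have "\<dots> = (\<bar>c\<bar> / real D) ^ D" using pw by (simp only: D_def)
  finally have "(L * lam0 ^ k) ^ D = (\<bar>c\<bar> / real D) ^ D" .
  hence M: "L * lam0 ^ k = \<bar>c\<bar> / real D"
    by (rule power_eq_imp_eq_base) (use L0 l0 D0 in auto)
  show ?thesis
  proof (cases "c < 0")
    case True
    have "- (real (2 * d) * ((\<Prod>i<n. lam i ^ Poly_Mapping.lookup \<alpha> i) * lam0 ^ k)) = c"
      using M True D0 unfolding L_def[symmetric] D_def[symmetric] by simp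
    from gen2[OF keys tk d la[unfolded D_def] this] show ?thesis .
  next
    case False
    with sg obtain j where j: "j < n" "odd (Poly_Mapping.lookup \<alpha> j)" by auto
    have cp: "c > 0" using False c0 by simp
    define lam' where "lam' = lam(j := - lam j)"
    have la': "\<forall>i<n. real (Poly_Mapping.lookup \<alpha> i) * lam' i ^ (2 * d) = a i"
      using la evD unfolding lam'_def D_def by (auto simp: power_minus_even)
    have "(\<Prod>i<n. lam' i ^ Poly_Mapping.lookup \<alpha> i)
        = lam' j ^ Poly_Mapping.lookup \<alpha> j * (\<Prod>i\<in>{..<n}-{j}. lam' i ^ Poly_Mapping.lookup \<alpha> i)"
      using j by (simp add: prod.remove)
    also have "\<dots> = - (lam j ^ Poly_Mapping.lookup \<alpha> j * (\<Prod>i\<in>{..<n}-{j}. lam i ^ Poly_Mapping.lookup \<alpha> i))"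
      using j by (simp add: lam'_def power_minus_odd)
    also have "\<dots> = - L"
      unfolding L_def using j by (simp add: prod.remove)
    finally have P': "(\<Prod>i<n. lam' i ^ Poly_Mapping.lookup \<alpha> i) = - L" .
    have "- (real (2 * d) * ((\<Prod>i<n. lam' i ^ Poly_Mapping.lookup \<alpha> i) * lam0 ^ k)) = c"
      unfolding P' using M cp D0 unfolding D_def by simp
    from gen2[OF keys tk d la' this] show ?thesis .
  qed
qed



theorem theorem3p1:
  fixes n d :: nat and f :: mpoly and r :: real
    and a :: "(nat \<Rightarrow>\<^sub>0 nat) \<Rightarrow> nat \<Rightarrow> real"
  assumes vars: "in_vars n f"
    and nonconst: "\<exists>\<alpha>\<in>Poly_Mapping.keys f. \<alpha> \<noteq> 0"
    and deg: "poly_deg f = 2 * d"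
    and a_nonneg: "\<forall>\<alpha>\<in>Delta n d f. \<forall>i<n. a \<alpha> i \<ge> 0"
    and a_zero: "\<forall>\<alpha>\<in>Delta n d f. \<forall>i<n. a \<alpha> i = 0 \<longleftrightarrow> Poly_Mapping.lookup \<alpha> i = 0"
    and cond1: "\<forall>\<alpha>\<in>Delta n d f. tdeg \<alpha> = 2 * d \<longrightarrow>
        real (2 * d) ^ (2 * d) * vpow n (a \<alpha>) \<alpha>
          = \<bar>coef f \<alpha>\<bar> ^ (2 * d) * vpow n (\<lambda>i. real (Poly_Mapping.lookup \<alpha> i)) \<alpha>"
    and cond2: "\<forall>i<n. coef f (pure (2 * d) i) \<ge> (\<Sum>\<alpha>\<in>Delta n d f. a \<alpha> i)"
    and cond3: "coef f 0 - r \<ge>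
        (\<Sum>\<alpha>\<in>{\<alpha>\<in>Delta n d f. tdeg \<alpha> < 2 * d}.
           real (2 * d - tdeg \<alpha>) *
           ((\<bar>coef f \<alpha>\<bar> ^ (2 * d) * vpow n (\<lambda>i. real (Poly_Mapping.lookup \<alpha> i)) \<alpha>)
             / (real (2 * d) ^ (2 * d) * vpow n (a \<alpha>) \<alpha>))
           powr (1 / real (2 * d - tdeg \<alpha>)))"
  shows "SOBS n (f - mono r 0)"
proof -
  let ?D = "Delta n d f"
  let ?O = "Omega n d f"
  let ?Dl = "{\<alpha>\<in>Delta n d f. tdeg \<alpha> < 2 * d}"
  have finK: "finite (Poly_Mapping.keys f)" by simp
  have DO: "?D \<subseteq> ?O" unfolding Delta_def by auto
  have OK: "?O \<subseteq> Poly_Mapping.keys f" unfolding Omega_def by auto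
  have finD: "finite ?D" using DO OK finK by (meson finite_subset)
  have finO: "finite ?O" using OK finK by (meson finite_subset)
  have kv: "Poly_Mapping.keys \<alpha> \<subseteq> {..<n}" if "\<alpha> \<in> Poly_Mapping.keys f" for \<alpha>
    using vars that unfolding in_vars_def by auto
  have Kne: "Poly_Mapping.keys f \<noteq> {}" using nonconst by auto
  have tle: "tdeg \<alpha> \<le> 2 * d" if "\<alpha> \<in> Poly_Mapping.keys f" for \<alpha>
  proof -
    have "tdeg \<alpha> \<le> Max (tdeg ` Poly_Mapping.keys f)" using that finK by (intro Max_ge) auto
    thus ?thesis using deg Kne unfolding poly_deg_def by simp
  qed
  have d1: "d \<ge> 1"
  proof -
    obtain \<alpha> where a: "\<alpha> \<in> Poly_Mapping.keys f" "\<alpha> \<noteq> 0" using nonconst by blast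
    have "Poly_Mapping.keys \<alpha> \<noteq> {}" using a(2) by simp
    hence "tdeg \<alpha> > 0" unfolding tdeg_def
      by (intro sum_pos) (auto simp: in_keys_iff)
    thus ?thesis using tle[OF a(1)] by simp
  qed
  define bx where "bx \<alpha> = real (2 * d - tdeg \<alpha>) *
           ((\<bar>coef f \<alpha>\<bar> ^ (2 * d) * vpow n (\<lambda>i. real (Poly_Mapping.lookup \<alpha> i)) \<alpha>)
             / (real (2 * d) ^ (2 * d) * vpow n (a \<alpha>) \<alpha>))
           powr (1 / real (2 * d - tdeg \<alpha>))" for \<alpha>
  have c3: "coef f 0 - r \<ge> (\<Sum>\<alpha>\<in>?Dl. bx \<alpha>)" using cond3 unfolding bx_def .
  define B where "B \<alpha> = (if tdeg \<alpha> < 2 * d then bx \<alpha> else 0)" for \<alpha>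
  define g where "g \<alpha> = (\<Sum>i<n. mono (a \<alpha> i) (pure (2 * d) i)) + mono (B \<alpha>) 0 + mono (coef f \<alpha>) \<alpha>" for \<alpha>
  define R where "R = (\<Sum>i<n. mono (coef f (pure (2 * d) i) - (\<Sum>\<alpha>\<in>?D. a \<alpha> i)) (pure (2 * d) i))
     + (\<Sum>\<alpha>\<in>?O - ?D. mono (coef f \<alpha>) \<alpha>) + mono (coef f 0 - r - (\<Sum>\<alpha>\<in>?Dl. bx \<alpha>)) 0"
  have gS: "SOBS n (g \<alpha>)" if aD: "\<alpha> \<in> ?D" for \<alpha>
  proof -
    have aK: "\<alpha> \<in> Poly_Mapping.keys f" using aD DO OK by auto
    note keys = kv[OF aK]
    have c0: "coef f \<alpha> \<noteq> 0" using aK by (simp add: coef_def in_keys_iff)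
    have sg: "coef f \<alpha> < 0 \<or> (\<exists>j<n. odd (Poly_Mapping.lookup \<alpha> j))" using aD unfolding Delta_def by auto
    have an: "\<forall>i<n. a \<alpha> i \<ge> 0" using a_nonneg aD by auto
    have az: "\<forall>i<n. a \<alpha> i = 0 \<longleftrightarrow> Poly_Mapping.lookup \<alpha> i = 0" using a_zero aD by auto
    define A where "A = vpow n (a \<alpha>) \<alpha>"
    define N where "N = vpow n (\<lambda>i. real (Poly_Mapping.lookup \<alpha> i)) \<alpha>"
    have A0: "A > 0" unfolding A_def vpow_def
    proof (rule prod_pos)
      fix i assume "i \<in> {..<n}"
      thus "0 < a \<alpha> i ^ Poly_Mapping.lookup \<alpha> i" using an az
        by (cases "Poly_Mapping.lookup \<alpha> i = 0") (auto simp: order.order_iff_strict)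
    qed
    have N0: "N > 0" unfolding N_def vpow_def
    proof (rule prod_pos)
      fix i assume "i \<in> {..<n}"
      thus "0 < real (Poly_Mapping.lookup \<alpha> i) ^ Poly_Mapping.lookup \<alpha> i"
        by (cases "Poly_Mapping.lookup \<alpha> i = 0") auto
    qed
    have Dp: "real (2 * d) > 0" using d1 by simp
    show ?thesis
    proof (cases "tdeg \<alpha> < 2 * d")
      case True
      define k where "k = 2 * d - tdeg \<alpha>"
      have tk: "tdeg \<alpha> + k = 2 * d" using True unfolding k_def by simp
      have k0: "real k > 0" using True unfolding k_def by simp
      define Bv where "Bv = (\<bar>coef f \<alpha>\<bar> ^ (2 * d) * N) / (real (2 * d) ^ (2 * d) * A)"
      have Bv0: "Bv > 0" unfolding Bv_def using c0 N0 A0 Dp by (intro divide_pos_pos mult_pos_pos) auto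
      have bxe: "bx \<alpha> = real k * Bv powr (1 / real k)"
        unfolding bx_def Bv_def k_def A_def N_def ..
      define lam0 where "lam0 = root (2 * d) (Bv powr (1 / real k))"
      have l0: "lam0 \<ge> 0" unfolding lam0_def by (intro real_root_ge_zero) simp
      have l0D: "lam0 ^ (2 * d) = Bv powr (1 / real k)"
        unfolding lam0_def using d1 by (intro real_root_pow_pos2) auto
      have "(lam0 ^ k) ^ (2 * d) = (lam0 ^ (2 * d)) ^ k"
        by (metis power_mult mult.commute)
      also have "\<dots> = (Bv powr (1 / real k)) ^ k" by (simp only: l0D)
      also have "\<dots> = (Bv powr (1 / real k)) powr real k" using Bv0 by (simp add: powr_realpow)
      also have "\<dots> = Bv" using Bv0 k0 by (simp add: powr_powr)
      finally have lk: "(lam0 ^ k) ^ (2 * d) = Bv" .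
      have pw: "(A / N) * (lam0 ^ k) ^ (2 * d) = (\<bar>coef f \<alpha>\<bar> / real (2 * d)) ^ (2 * d)"
        unfolding lk Bv_def power_divide using A0 N0 Dp by (simp add: field_simps)
      have "SOBS n ((\<Sum>i<n. mono (a \<alpha> i) (pure (2 * d) i)) + mono (real k * lam0 ^ (2 * d)) 0 + mono (coef f \<alpha>) \<alpha>)"
        by (rule gen[OF keys tk d1 c0 sg an az l0 pw[unfolded A_def N_def]])
      moreover have "real k * lam0 ^ (2 * d) = B \<alpha>" unfolding B_def using True by (simp add: l0D bxe)
      ultimately show ?thesis unfolding g_def by simp
    next
      case False
      hence tk: "tdeg \<alpha> + 0 = 2 * d" using tle[OF aK] by simp
      have "real (2 * d) ^ (2 * d) * A = \<bar>coef f \<alpha>\<bar> ^ (2 * d) * N"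
        using cond1 aD tk unfolding A_def N_def by simp
      hence pw: "(A / N) * (1 ^ 0) ^ (2 * d) = (\<bar>coef f \<alpha>\<bar> / real (2 * d)) ^ (2 * d)"
        unfolding power_divide using A0 N0 Dp by (simp add: field_simps)
      have "SOBS n ((\<Sum>i<n. mono (a \<alpha> i) (pure (2 * d) i)) + mono (real 0 * 1 ^ (2 * d)) 0 + mono (coef f \<alpha>) \<alpha>)"
        by (rule gen[OF keys tk d1 c0 sg an az _ pw[unfolded A_def N_def]]) simp
      moreover have "B \<alpha> = 0" unfolding B_def using False by simp
      ultimately show ?thesis unfolding g_def by simp
    qed
  qed
  have pk: "Poly_Mapping.keys (pure (2 * d) i) \<subseteq> {..<n}" if "i < n" for i
    using that by (simp add: pure_def)
  have pe: "\<forall>j. even (Poly_Mapping.lookup (pure (2 * d) i) j)" for i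
    by (simp add: pure_def lookup_single when_def)
  have RS: "SOBS n R"
    unfolding R_def
  proof (intro SOBS_add SOBS_sum)
    fix i assume "i \<in> {..<n}"
    thus "SOBS n (mono (coef f (pure (2 * d) i) - (\<Sum>\<alpha>\<in>?D. a \<alpha> i)) (pure (2 * d) i))"
      using cond2 pk pe by (intro even_mono) auto
  next
    fix \<alpha> assume a: "\<alpha> \<in> ?O - ?D"
    hence k: "\<alpha> \<in> Poly_Mapping.keys f" using OK by auto
    from a have nn: "\<not> coef f \<alpha> < 0" and ev: "\<forall>i<n. even (Poly_Mapping.lookup \<alpha> i)"
      unfolding Delta_def by auto
    have "\<forall>i. even (Poly_Mapping.lookup \<alpha> i)"
    proof
      fix i show "even (Poly_Mapping.lookup \<alpha> i)"
      proof (cases "i < n")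
        case True then show ?thesis using ev by auto
      next
        case False
        hence "i \<notin> Poly_Mapping.keys \<alpha>" using kv[OF k] by auto
        thus ?thesis by (simp add: in_keys_iff)
      qed
    qed
    thus "SOBS n (mono (coef f \<alpha>) \<alpha>)" using kv[OF k] nn by (intro even_mono) auto
  next
    show "SOBS n (mono (coef f 0 - r - (\<Sum>\<alpha>\<in>?Dl. bx \<alpha>)) 0)"
      using c3 by (intro even_mono) auto
  qed
  have pinj: "(pure (2 * d) j = pure (2 * d) i) = (i = j)" for i j
  proof
    assume "pure (2 * d) j = pure (2 * d) i"
    hence "Poly_Mapping.lookup (pure (2 * d) j) j = Poly_Mapping.lookup (pure (2 * d) i) j" by simp
    thus "i = j" using d1 by (auto simp: pure_def lookup_single when_def split: if_splits)
  qed simp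
  have p0: "pure (2 * d) i \<noteq> 0" for i
  proof
    assume "pure (2 * d) i = 0"
    hence "Poly_Mapping.lookup (pure (2 * d) i) i = 0" by simp
    thus False using d1 by (simp add: pure_def)
  qed
  have Dn0: "\<alpha> \<noteq> 0" if "\<alpha> \<in> ?O" for \<alpha> using that unfolding Omega_def by auto
  have Dnp: "\<alpha> \<noteq> pure (2 * d) i" if "\<alpha> \<in> ?O" "i < n" for \<alpha> i using that unfolding Omega_def by auto
  have neut: "(\<Sum>i<n. if P i then (x i :: real) else 0) = 0" if "\<forall>i<n. \<not> P i" for P x
    using that by (intro sum.neutral) auto
  have eq: "f - mono r 0 = (\<Sum>\<alpha>\<in>?D. g \<alpha>) + R"
  proof (rule poly_mapping_eqI)
    fix \<beta>
    have "Poly_Mapping.lookup ((\<Sum>\<alpha>\<in>?D. g \<alpha>) + R) \<beta> =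
        (\<Sum>\<alpha>\<in>?D. \<Sum>i<n. if \<beta> = pure (2 * d) i then a \<alpha> i else 0)
      + (\<Sum>\<alpha>\<in>?D. if \<beta> = 0 then B \<alpha> else 0)
      + (if \<beta> \<in> ?D then coef f \<beta> else 0)
      + (\<Sum>i<n. if \<beta> = pure (2 * d) i then coef f (pure (2 * d) i) - (\<Sum>\<alpha>\<in>?D. a \<alpha> i) else 0)
      + (if \<beta> \<in> ?O - ?D then coef f \<beta> else 0)
      + (if \<beta> = 0 then coef f 0 - r - (\<Sum>\<alpha>\<in>?Dl. bx \<alpha>) else 0)"
      unfolding g_def R_def
      by (simp only: lookup_add lookup_sum lookup_mono sum.distrib sum.delta' finD finO finite_Diff)
    also have "\<dots> = Poly_Mapping.lookup (f - mono r 0) \<beta>"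
    proof -
      have LHS: "Poly_Mapping.lookup (f - mono r 0) \<beta> = coef f \<beta> - (if \<beta> = 0 then r else 0)"
        by (simp add: lookup_minus lookup_mono coef_def)
      consider (z) "\<beta> = 0" | (p) j where "j < n" "\<beta> = pure (2 * d) j" | (o) "\<beta> \<noteq> 0" "\<forall>i<n. \<beta> \<noteq> pure (2 * d) i"
        by blast
      thus ?thesis
      proof cases
        case z
        have "(\<Sum>\<alpha>\<in>?D. B \<alpha>) = (\<Sum>\<alpha>\<in>?Dl. bx \<alpha>)"
          unfolding B_def using finD by (simp add: sum.inter_filter)
        moreover have "0 \<notin> ?D" "0 \<notin> ?O" using Dn0 DO by auto
        ultimately show ?thesis unfolding LHS using z p0 neut[of "\<lambda>i. 0 = pure (2 * d) i"]
          by (simp add: neut)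
      next
        case p
        have nD: "\<beta> \<notin> ?O" using Dnp p by auto
        hence "\<beta> \<notin> ?D" using DO by auto
        moreover have "\<beta> \<noteq> 0" using p p0 by simp
        ultimately show ?thesis unfolding LHS using nD p
          by (simp add: pinj sum_if_eq sum.swap[of _ "{..<n}"])
      next
        case o
        have "(\<Sum>\<alpha>\<in>?D. \<Sum>i<n. if \<beta> = pure (2 * d) i then a \<alpha> i else 0) = 0"
          using o by (simp add: neut)
        moreover have "(\<Sum>i<n. if \<beta> = pure (2 * d) i then coef f (pure (2 * d) i) - (\<Sum>\<alpha>\<in>?D. a \<alpha> i) else 0) = 0"
          using o by (simp add: neut)
        moreover have "coef f \<beta> = (if \<beta> \<in> ?D then coef f \<beta> else 0) + (if \<beta> \<in> ?O - ?D then coef f \<beta> else 0)"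
        proof (cases "\<beta> \<in> ?O")
          case True then show ?thesis by auto
        next
          case False
          hence "\<beta> \<notin> Poly_Mapping.keys f" using o unfolding Omega_def by auto
          hence "coef f \<beta> = 0" by (simp add: coef_def in_keys_iff)
          thus ?thesis using DO False by auto
        qed
        ultimately show ?thesis unfolding LHS using o by simp
      qed
    qed
    finally show "Poly_Mapping.lookup (f - mono r 0) \<beta> = Poly_Mapping.lookup ((\<Sum>\<alpha>\<in>?D. g \<alpha>) + R) \<beta>" by simp
  qed
  show ?thesis unfolding eq by (intro SOBS_add SOBS_sum gS RS)
qed


end
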